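(* For a generic twisted $(N,1)$ spiral ($N\ge5$, $N\not\equiv1\pmod3$) with invariants from its normalized lift, $$a_{N+1}=a_2,\qquad b_{N+1}=\frac{b_{-1}A_2}{A_0},\qquad c_{N+1}=\frac{c_{-1}A_2}{A_0}.$$
   Context: Points lie in $\mathbb{RP}^2$; $M\in PSL(3,\mathbb R)$ is identified with a representing matrix in $SL(3,\mathbb R)$. For a bi-infinite sequence $(p_k)_{k\in\mathbb Z}$ in $\mathbb{RP}^2$, $T(p_k)=\overline{p_{k-1}p_{k+1}}\cap\overline{p_kp_{k+2}}$. A twisted $(N,1)$ pentagram spiral with monodromy $M$ is a bi-infinite sequence $(p_k)$ with $p_{N+k}=M\cdot T(p_{k-1})$ for all $k$, such that $p_{N+1}$ lies on the segment joining $p_N$ and $M\cdot p_1$; "generic" means all determinants and denominators appearing are nonzero. For vectors define $T(V_i)=(V_{i-1}\times V_{i+1})\times(V_i\times V_{i+2})$, $\overline T(V_i)=c_{i+1}(V_i\times V_{i+1})\times(V_{i-2}\times V_{i-1})$, $c_i=\det(V_{i+1},V_{i+2},V_{i+3})/\det(V_i,V_{i+1},V_{i+2})$. The normalized lift is the unique sequence $V_k$ with $[V_k]=p_k$, $V_{N+i}=MT(V_{i-1})$ and $V_{-i}=M^{-1}\overline T(V_{N-i+1})$ for $i\ge1$, and $\det(V_i,V_{i+1},V_{i+2})=1$ for $i=0,\dots,N$. Invariants: $V_{i+3}=a_iV_{i+2}+b_iV_{i+1}+c_iV_i$; $A_i=c_i+a_ib_{i-1}$. *)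

theory Defs
  imports "HOL-Analysis.Analysis" "HOL-Analysis.Cross3"
begin

definition det3 :: "real^3 \<Rightarrow> real^3 \<Rightarrow> real^3 \<Rightarrow> real" where
  "det3 u v w = det (vector [u, v, w] :: real^3^3)"

definition cdet :: "(int \<Rightarrow> real^3) \<Rightarrow> int \<Rightarrow> real" where
  "cdet V i = det3 (V (i+1)) (V (i+2)) (V (i+3)) / det3 (V i) (V (i+1)) (V (i+2))"

definition Tvec :: "(int \<Rightarrow> real^3) \<Rightarrow> int \<Rightarrow> real^3" where
  "Tvec V i = cross3 (cross3 (V (i-1)) (V (i+1))) (cross3 (V i) (V (i+2)))"

definition Tbarvec :: "(int \<Rightarrow> real^3) \<Rightarrow> int \<Rightarrow> real^3" where
  "Tbarvec V i = cdet V (i+1) *\<^sub>R cross3 (cross3 (V i) (V (i+1))) (cross3 (V (i-2)) (V (i-1)))"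

definition proj_eq :: "real^3 \<Rightarrow> real^3 \<Rightarrow> bool" where
  "proj_eq u v \<longleftrightarrow> u \<noteq> 0 \<and> v \<noteq> 0 \<and> (\<exists>s::real. u = s *\<^sub>R v)"

definition normalized_spiral_lift :: "int \<Rightarrow> real^3^3 \<Rightarrow> (int \<Rightarrow> real^3) \<Rightarrow> bool" where
  "normalized_spiral_lift N M V \<longleftrightarrow>
     det M = 1 \<and>
     \<comment> \<open>twisted (N,1) spiral condition p_{N+k} = M T(p_{k-1}) for all k, projectively\<close>
     (\<forall>k. proj_eq (V (N + k)) (M *v Tvec V (k - 1))) \<and>
     \<comment> \<open>p_{N+1} lies on the line through p_N and M p_1\<close>
     det3 (V N) (V (N + 1)) (M *v V 1) = 0 \<and>
     \<comment> \<open>normalization of the lift\<close>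
     (\<forall>i\<ge>1. V (N + i) = M *v Tvec V (i - 1)) \<and>
     (\<forall>i\<ge>1. V (- i) = matrix_inv M *v Tbarvec V (N - i + 1)) \<and>
     (\<forall>i. 0 \<le> i \<and> i \<le> N \<longrightarrow> det3 (V i) (V (i+1)) (V (i+2)) = 1)"

end

theory Submission
  imports Defs
begin

lemma det3_expand: "det3 u v w = u$1 *  v$2 *  w$3 + u$2 *  v$3 *  w$1 + u$3 *  v$1 *  w$2 - u$1 *  v$3 *  w$2 - u$2 *  v$1 *  w$3 - u$3 *  v$2 *  w$1"
  unfolding det3_def by (simp add: det_3 vector_def)

lemma det3_lin: "det3 q r (\<alpha> *\<^sub>R r + \<beta> *\<^sub>R q + \<gamma> *\<^sub>R p) = \<gamma> * det3 p q r"
  by (simp add: det3_expand algebra_simps)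

lemma T_lin: "cross3 (cross3 p r) (cross3 q (\<alpha> *\<^sub>R r + \<beta> *\<^sub>R q + \<gamma> *\<^sub>R p))
   = det3 p q r *\<^sub>R (\<alpha> *\<^sub>R r + \<gamma> *\<^sub>R p)"
  by (simp add: det3_expand cross3_def vec_eq_iff forall_3 vector_def algebra_simps)

lemma indep: assumes "x *\<^sub>R u + y *\<^sub>R v + z *\<^sub>R w = 0" "det3 u v w \<noteq> 0"
  shows "x = 0 \<and> y = 0 \<and> z = 0"
proof -
  have "det3 (x *\<^sub>R u + y *\<^sub>R v + z *\<^sub>R w) v w = x * det3 u v w"
       "det3 u (x *\<^sub>R u + y *\<^sub>R v + z *\<^sub>R w) w = y * det3 u v w"
       "det3 u v (x *\<^sub>R u + y *\<^sub>R v + z *\<^sub>R w) = z * det3 u v w"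
    by (simp_all add: det3_expand algebra_simps)
  moreover have "det3 0 v w = 0" "det3 u 0 w = 0" "det3 u v 0 = 0" by (simp_all add: det3_expand)
  ultimately show ?thesis using assms by auto
qed

lemma Tform:
  assumes rec: "\<forall>i. V (i+3) = a i *\<^sub>R V (i+2) + b i *\<^sub>R V (i+1) + c i *\<^sub>R V i"
  shows "Tvec V i = det3 (V (i-1)) (V i) (V (i+1)) *\<^sub>R (a (i-1) *\<^sub>R V (i+1) + c (i-1) *\<^sub>R V (i-1))"
proof -
  have e: "V (i+2) = a (i-1) *\<^sub>R V (i+1) + b (i-1) *\<^sub>R V i + c (i-1) *\<^sub>R V (i-1)"
    using rec[rule_format, of "i-1"] by (simp add: algebra_simps)
  show ?thesis unfolding Tvec_def e by (rule T_lin)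
qed

lemma Dform:
  assumes rec: "\<forall>i. V (i+3) = a i *\<^sub>R V (i+2) + b i *\<^sub>R V (i+1) + c i *\<^sub>R V i"
  shows "det3 (V (i+1)) (V (i+2)) (V (i+3)) = c i * det3 (V i) (V (i+1)) (V (i+2))"
  unfolding rec[rule_format, of i] by (rule det3_lin)

theorem mainTheorem11:
  fixes N :: int and M :: "real^3^3" and V :: "int \<Rightarrow> real^3"
    and a b c :: "int \<Rightarrow> real"
  assumes "N \<ge> 5" and "N mod 3 \<noteq> 1"
    and lift: "normalized_spiral_lift N M V"
    and generic_det: "\<forall>i. det3 (V i) (V (i+1)) (V (i+2)) \<noteq> 0"
    and rec: "\<forall>i. V (i+3) = a i *\<^sub>R V (i+2) + b i *\<^sub>R V (i+1) + c i *\<^sub>R V i"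
    and generic_A0: "c 0 + a 0 * b (-1) \<noteq> 0"
  shows "a (N+1) = a 2
       \<and> b (N+1) = b (-1) * (c 2 + a 2 * b 1) / (c 0 + a 0 * b (-1))
       \<and> c (N+1) = c (-1) * (c 2 + a 2 * b 1) / (c 0 + a 0 * b (-1))"
proof -
  define A0 where "A0 = c 0 + a 0 * b (-1)"
  define \<beta> where "\<beta> = b (-1) * (c 2 + a 2 * b 1) / A0"
  define \<gamma> where "\<gamma> = c (-1) * (c 2 + a 2 * b 1) / A0"
  have A0: "A0 \<noteq> 0" using generic_A0 A0_def by simp
  have norm: "\<forall>i. 0 \<le> i \<and> i \<le> N \<longrightarrow> det3 (V i) (V (i+1)) (V (i+2)) = 1"
   and up: "\<forall>i\<ge>1. V (N + i) = M *v Tvec V (i - 1)"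
    using lift unfolding normalized_spiral_lift_def by auto
  have D0: "det3 (V 0) (V 1) (V 2) = 1" using norm[rule_format, of 0] assms(1) by simp
  have D1: "det3 (V 1) (V 2) (V 3) = 1" using norm[rule_format, of 1] assms(1) by simp
  have D2: "det3 (V 2) (V 3) (V 4) = 1" using norm[rule_format, of 2] assms(1) by simp
  have c0: "c 0 = 1" using Dform[OF rec, of 0] D0 D1 by simp
  have cm1: "c (-1) * det3 (V (-1)) (V 0) (V 1) = 1" using Dform[OF rec, of "-1"] D0 by simp
  have W0: "Tvec V 0 = det3 (V (-1)) (V 0) (V 1) *\<^sub>R (a (-1) *\<^sub>R V 1 + c (-1) *\<^sub>R V (-1))"
    using Tform[OF rec, of 0] by simp
  have W1: "Tvec V 1 = a 0 *\<^sub>R V 2 + c 0 *\<^sub>R V 0"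
    using Tform[OF rec, of 1] D0 by simp
  have W2: "Tvec V 2 = a 1 *\<^sub>R V 3 + c 1 *\<^sub>R V 1"
    using Tform[OF rec, of 2] D1 by simp
  have W3: "Tvec V 3 = a 2 *\<^sub>R V 4 + c 2 *\<^sub>R V 2"
    using Tform[OF rec, of 3] D2 by simp
  have e2: "V 2 = a (-1) *\<^sub>R V 1 + b (-1) *\<^sub>R V 0 + c (-1) *\<^sub>R V (-1)"
    using rec[rule_format, of "-1"] by simp
  have e4: "V 4 = a 1 *\<^sub>R V 3 + b 1 *\<^sub>R V 2 + c 1 *\<^sub>R V 1"
    using rec[rule_format, of 1] by simp
  have key: "Tvec V 3 = a 2 *\<^sub>R Tvec V 2 + \<beta> *\<^sub>R Tvec V 1 + \<gamma> *\<^sub>R Tvec V 0"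
  proof (subst vec_eq_iff, intro allI)
    fix k
    have k2: "V 2 $ k = a (-1) * V 1 $ k + b (-1) * V 0 $ k + c (-1) * V (-1) $ k"
      using e2 by (simp add: vec_eq_iff)
    have k4: "V 4 $ k = a 1 * V 3 $ k + b 1 * V 2 $ k + c 1 * V 1 $ k"
      using e4 by (simp add: vec_eq_iff)
    define d where "d = det3 (V (-1)) (V 0) (V 1)"
    have cd: "c (-1) * d = 1" using cm1 d_def by simp
    have "A0 * (a 2 * V 4 $ k + c 2 * V 2 $ k) = A0 * (a 2 * (a 1 * V 3 $ k + c 1 * V 1 $ k))
       + b (-1) * (c 2 + a 2 * b 1) * (a 0 * V 2 $ k + c 0 * V 0 $ k)
       + (c 2 + a 2 * b 1) * (c (-1) * d) * (a (-1) * V 1 $ k + c (-1) * V (-1) $ k)"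
      unfolding cd A0_def c0 k4 using k2 by (simp add: algebra_simps)
    then have "a 2 * V 4 $ k + c 2 * V 2 $ k = a 2 * (a 1 * V 3 $ k + c 1 * V 1 $ k)
       + \<beta> * (a 0 * V 2 $ k + c 0 * V 0 $ k)
       + \<gamma> * (d * (a (-1) * V 1 $ k + c (-1) * V (-1) $ k))"
      unfolding \<beta>_def \<gamma>_def using A0 by (simp add: field_simps)
    then show "Tvec V 3 $ k = (a 2 *\<^sub>R Tvec V 2 + \<beta> *\<^sub>R Tvec V 1 + \<gamma> *\<^sub>R Tvec V 0) $ k"
      unfolding W0 W1 W2 W3 d_def by simp
  qed
  have u1: "V (N+1) = M *v Tvec V 0" using up[rule_format, of 1] by simp
  have u2: "V (N+2) = M *v Tvec V 1" using up[rule_format, of 2] by simp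
  have u3: "V (N+3) = M *v Tvec V 2" using up[rule_format, of 3] by simp
  have u4: "V (N+4) = M *v Tvec V 3" using up[rule_format, of 4] by simp
  have r: "V (N+4) = a (N+1) *\<^sub>R V (N+3) + b (N+1) *\<^sub>R V (N+2) + c (N+1) *\<^sub>R V (N+1)"
    using rec[rule_format, of "N+1"] by (simp add: add.assoc)
  have r2: "V (N+4) = a 2 *\<^sub>R V (N+3) + \<beta> *\<^sub>R V (N+2) + \<gamma> *\<^sub>R V (N+1)"
    unfolding u1 u2 u3 u4 key by (simp add: algebra_simps)
  have "(c (N+1) - \<gamma>) *\<^sub>R V (N+1) + (b (N+1) - \<beta>) *\<^sub>R V (N+2) + (a (N+1) - a 2) *\<^sub>R V (N+3) = 0"
    using r r2 by (simp add: algebra_simps)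
  moreover have "det3 (V (N+1)) (V (N+2)) (V (N+3)) \<noteq> 0"
    using generic_det[rule_format, of "N+1"] by (simp add: add.assoc)
  ultimately have "c (N+1) - \<gamma> = 0 \<and> b (N+1) - \<beta> = 0 \<and> a (N+1) - a 2 = 0" by (rule indep)
  then show ?thesis unfolding \<beta>_def \<gamma>_def A0_def by simp
qed

end
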